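(* There exist a noisy discrete memoryless classical channel $N_n$ and a perfect $d$-level quantum channel $Q_p$ (for some $d\ge 1$) such that the one-shot zero-error classical capacity of the parallel use of $N_n$ and $Q_p$ strictly exceeds the product $\mathfrak{C}_0(N_n)\cdot \mathfrak{C}_0(Q_p)=\alpha(G(N_n))\cdot d$ of their individual one-shot zero-error classical capacities.
   Context: A discrete memoryless classical channel $N$ has a finite input alphabet $\mathcal{X}$, a finite output alphabet $\mathcal{Y}$ and conditional probabilities $P(y|x)$ with $\sum_{y}P(y|x)=1$ for each $x$. Let $\Gamma(x)=\{y: P(y|x)>0\}$. Distinct inputs $x,x'$ are confusable if $\Gamma(x)\cap\Gamma(x')\neq\varnothing$. The confusability graph $G(N)$ has vertex set $\mathcal{X}$, with an edge between distinct confusable inputs. The one-shot zero-error classical capacity of $N$ is $\mathfrak{C}_0(N)=\alpha(G(N))$, the independence number, i.e. the maximum number of messages that can be sent with zero error in one use (capacity is measured as a number of messages, not its logarithm). A perfect $d$-level quantum channel is the identity map on density operators on $\mathbb{C}^d$; its one-shot zero-error classical capacity is $d$. The one-shot zero-error classical capacity of the parallel (single, simultaneous) use of $N$ and a perfect $d$-level quantum channel is the largest integer $M$ for which there exist, for each message $m\in\{1,\dots,M\}$, a classical input $x_m\in\mathcal{X}$ and a quantum state $\rho_m$ on $\mathbb{C}^d$, and, for each output $y\in\mathcal{Y}$, a measurement (POVM) $\{E^{(y)}_{m'}\}_{m'=1}^M$ on $\mathbb{C}^d$, such that the receiver, seeing output $y$ of $N$ on input $x_m$ and measuring $\rho_m$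 with $\{E^{(y)}_{m'}\}$, obtains outcome $m$ with probability one, i.e. $\sum_{y}P(y|x_m)\,\mathrm{Tr}(E^{(y)}_{m}\rho_m)=1$ for every $m$. *)

theory Defs
  imports "Jordan_Normal_Form.Matrix"
begin

definition classical_channel :: "nat \<Rightarrow> nat \<Rightarrow> (nat \<Rightarrow> nat \<Rightarrow> real) \<Rightarrow> bool" where
  "classical_channel nx ny P \<longleftrightarrow> 0 < nx \<and> 0 < ny \<and>
     (\<forall>x<nx. \<forall>y<ny. 0 \<le> P x y) \<and> (\<forall>x<nx. (\<Sum>y<ny. P x y) = 1)"

definition confusable :: "nat \<Rightarrow> (nat \<Rightarrow> nat \<Rightarrow> real) \<Rightarrow> nat \<Rightarrow> nat \<Rightarrow> bool" where
  "confusable ny P x x' \<longleftrightarrow> x \<noteq> x' \<and> (\<exists>y<ny. 0 < P x y \<and> 0 < P x' y)"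

definition independent_set :: "nat \<Rightarrow> nat \<Rightarrow> (nat \<Rightarrow> nat \<Rightarrow> real) \<Rightarrow> nat set \<Rightarrow> bool" where
  "independent_set nx ny P S \<longleftrightarrow> S \<subseteq> {..<nx} \<and>
     (\<forall>x\<in>S. \<forall>x'\<in>S. \<not> confusable ny P x x')"

definition independence_number :: "nat \<Rightarrow> nat \<Rightarrow> (nat \<Rightarrow> nat \<Rightarrow> real) \<Rightarrow> nat" where
  "independence_number nx ny P = Max (card ` {S. independent_set nx ny P S})"

definition noisy_channel :: "nat \<Rightarrow> nat \<Rightarrow> (nat \<Rightarrow> nat \<Rightarrow> real) \<Rightarrow> bool" where
  "noisy_channel nx ny P \<longleftrightarrow> (\<exists>x<nx. \<exists>x'<nx. confusable ny P x x')"

definition mtrace :: "nat \<Rightarrow> complex mat \<Rightarrow> complex" where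
  "mtrace d A = (\<Sum>i<d. A $$ (i, i))"

definition psd :: "nat \<Rightarrow> complex mat \<Rightarrow> bool" where
  "psd d A \<longleftrightarrow> A \<in> carrier_mat d d \<and>
     (\<forall>v \<in> carrier_vec d. let q = (\<Sum>i<d. cnj (v $ i) * (A *\<^sub>v v) $ i)
                            in Im q = 0 \<and> 0 \<le> Re q)"

definition density_op :: "nat \<Rightarrow> complex mat \<Rightarrow> bool" where
  "density_op d \<rho> \<longleftrightarrow> psd d \<rho> \<and> mtrace d \<rho> = 1"

definition povm :: "nat \<Rightarrow> nat \<Rightarrow> (nat \<Rightarrow> complex mat) \<Rightarrow> bool" where
  "povm d M E \<longleftrightarrow> (\<forall>m<M. psd d (E m)) \<and>
     (\<forall>i<d. \<forall>j<d. (\<Sum>m<M. E m $$ (i, j)) = (1\<^sub>m d) $$ (i, j))"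

definition zero_error_code :: "nat \<Rightarrow> nat \<Rightarrow> (nat \<Rightarrow> nat \<Rightarrow> real) \<Rightarrow> nat \<Rightarrow> nat \<Rightarrow> bool" where
  "zero_error_code nx ny P d M \<longleftrightarrow>
     (\<exists>(x :: nat \<Rightarrow> nat) (\<rho> :: nat \<Rightarrow> complex mat) (E :: nat \<Rightarrow> nat \<Rightarrow> complex mat).
        (\<forall>m<M. x m < nx \<and> density_op d (\<rho> m)) \<and>
        (\<forall>y<ny. povm d M (E y)) \<and>
        (\<forall>m<M. (\<Sum>y<ny. complex_of_real (P (x m) y) * mtrace d (E y m * \<rho> m)) = 1))"

definition parallel_capacity :: "nat \<Rightarrow> nat \<Rightarrow> (nat \<Rightarrow> nat \<Rightarrow> real) \<Rightarrow> nat \<Rightarrow> nat" where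
  "parallel_capacity nx ny P d = (GREATEST M. zero_error_code nx ny P d M)"

text \<open>One-shot zero-error capacity of the perfect d-level quantum channel is d (given).\<close>

end

theory Submission
  imports Defs
begin


definition rp :: "nat \<Rightarrow> (nat \<Rightarrow> real) \<Rightarrow> complex mat" where
  "rp d u = mat d d (\<lambda>(i,j). complex_of_real (u i * u j / (\<Sum>k<d. (u k)\<^sup>2)))"

lemma rp_carrier: "rp d u \<in> carrier_mat d d" by (simp add: rp_def)

lemma rp_psd:
  assumes c: "(\<Sum>k<d. (u k)\<^sup>2) > 0"
  shows "psd d (rp d u)"
proof -
  define c where "c = (\<Sum>k<d. (u k)\<^sup>2)"
  have rp_eq: "rp d u = mat d d (\<lambda>(i,j). complex_of_real (u i * u j / c))" by (simp add: rp_def c_def)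
  have "Im q = 0 \<and> 0 \<le> Re q" if v: "v \<in> carrier_vec d" and q: "q = (\<Sum>i<d. cnj (v $ i) * (rp d u *\<^sub>v v) $ i)" for v q
  proof -
    define z where "z = (\<Sum>j<d. complex_of_real (u j) * v $ j)"
    have pt: "(rp d u *\<^sub>v v) $ i = complex_of_real (u i / c) * z" if "i < d" for i
      using that v by (simp add: rp_eq z_def scalar_prod_def sum_distrib_left lessThan_atLeast0 sum_divide_distrib algebra_simps)
    have "q = (\<Sum>i<d. cnj (v $ i) * (complex_of_real (u i / c) * z))"
      unfolding q by (rule sum.cong) (simp_all add: pt)
    also have "\<dots> = (\<Sum>i<d. cnj (v $ i) * complex_of_real (u i) * (z / complex_of_real c))"
      by (rule sum.cong) (simp_all add: field_simps)
    also have "\<dots> = (\<Sum>i<d. cnj (v $ i) * complex_of_real (u i) ) * z / complex_of_real c"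
      by (simp add: sum_distrib_right sum_divide_distrib del: of_real_divide)
    also have "(\<Sum>i<d. cnj (v $ i) * complex_of_real (u i)) = cnj z"
      by (simp add: z_def mult.commute)
    finally have "q = complex_of_real (((Re z)\<^sup>2 + (Im z)\<^sup>2) / c)"
      by (simp add: complex_mult_cnj mult.commute)
    then show ?thesis using c c_def by simp
  qed
  then show ?thesis unfolding psd_def Let_def by (simp add: rp_carrier)
qed

lemma rp_trace:
  assumes c: "(\<Sum>k<d. (u k)\<^sup>2) > 0"
  shows "mtrace d (rp d u) = 1"
proof -
  have "mtrace d (rp d u) = complex_of_real (\<Sum>i<d. (u i)\<^sup>2 / (\<Sum>k<d. (u k)\<^sup>2))"
    by (simp add: mtrace_def rp_def power2_eq_square)
  also have "\<dots> = 1" using c by (simp add: sum_divide_distrib[symmetric])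
  finally show ?thesis .
qed

lemma rp_trace2:
  assumes c: "(\<Sum>k<d. (u k)\<^sup>2) > 0"
  shows "mtrace d (rp d u * rp d u) = 1"
proof -
  define c where "c = (\<Sum>k<d. (u k)\<^sup>2)"
  have rp_eq: "rp d u = mat d d (\<lambda>(i,j). complex_of_real (u i * u j / c))" by (simp add: rp_def c_def)
  have "(rp d u * rp d u) $$ (i,i) = complex_of_real ((u i)\<^sup>2 / c)" if "i < d" for i
  proof -
    have "(rp d u * rp d u) $$ (i,i) = (\<Sum>j<d. complex_of_real (u i * u j / c * (u j * u i / c)))"
      using that by (simp add: rp_eq scalar_prod_def lessThan_atLeast0)
    also have "\<dots> = complex_of_real (\<Sum>j<d. (u i)\<^sup>2 / c / c * (u j)\<^sup>2)"
      unfolding of_real_sum by (intro sum.cong refl arg_cong[where f=complex_of_real]) (simp add: power2_eq_square)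
    also have "\<dots> = complex_of_real ((u i)\<^sup>2 / c / c * c)"
      by (simp add: c_def sum_distrib_left)
    finally show ?thesis using c c_def by simp
  qed
  then have "mtrace d (rp d u * rp d u) = complex_of_real (\<Sum>i<d. (u i)\<^sup>2 / c)"
    by (simp add: mtrace_def)
  also have "\<dots> = 1" using c c_def by (simp add: sum_divide_distrib[symmetric])
  finally show ?thesis .
qed



lemma sum_two:
  assumes "i < d" "j < d" "i \<noteq> j" "\<And>k. k < d \<Longrightarrow> k \<noteq> i \<Longrightarrow> k \<noteq> j \<Longrightarrow> f k = 0"
  shows "(\<Sum>k<d. f k) = f i + f (j::nat)"
proof -
  have "(\<Sum>k<d. f k) = (\<Sum>k\<in>{i,j}. f k)"
    by (rule sum.mono_neutral_right) (use assms in auto)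
  then show ?thesis using assms by simp
qed

lemma sum_one:
  assumes "i < d" "\<And>k. k < d \<Longrightarrow> k \<noteq> i \<Longrightarrow> f k = 0"
  shows "(\<Sum>k<d. f k) = f (i::nat)"
proof -
  have "(\<Sum>k<d. f k) = (\<Sum>k\<in>{i}. f k)"
    by (rule sum.mono_neutral_right) (use assms in auto)
  then show ?thesis using assms by simp
qed

lemma psd_quad:
  assumes "psd d A" "v \<in> carrier_vec d"
  shows "Im (\<Sum>i<d. cnj (v $ i) * (A *\<^sub>v v) $ i) = 0 \<and> 0 \<le> Re (\<Sum>i<d. cnj (v $ i) * (A *\<^sub>v v) $ i)"
  using assms unfolding psd_def Let_def by blast

lemma psd_diag:
  assumes "psd d A" "i < d"
  shows "Im (A $$ (i,i)) = 0 \<and> 0 \<le> Re (A $$ (i,i))"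
proof -
  define v where "v = vec d (\<lambda>k. if k = i then (1::complex) else 0)"
  have A: "A \<in> carrier_mat d d" using assms psd_def by blast
  have Av: "(A *\<^sub>v v) $ k = A $$ (k,i)" if "k < d" for k
  proof -
    have "(A *\<^sub>v v) $ k = (\<Sum>l<d. A $$ (k,l) * v $ l)"
      using A that by (simp add: scalar_prod_def lessThan_atLeast0 v_def row_def)
    also have "\<dots> = A $$ (k,i) * v $ i" by (rule sum_one) (use assms in \<open>auto simp: v_def\<close>)
    finally show ?thesis using assms by (simp add: v_def)
  qed
  have "(\<Sum>k<d. cnj (v $ k) * (A *\<^sub>v v) $ k) = cnj (v $ i) * (A *\<^sub>v v) $ i"
    by (rule sum_one) (use assms in \<open>auto simp: v_def\<close>)
  also have "\<dots> = A $$ (i,i)" using assms Av by (simp add: v_def)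
  finally show ?thesis using psd_quad[OF assms(1), of v] by (simp add: v_def)
qed

lemma psd_two:
  assumes "psd d A" "i < d" "j < d" "i \<noteq> j"
  shows "Im (A $$ (i,i) + c * A $$ (i,j) + cnj c * A $$ (j,i) + cnj c * c * A $$ (j,j)) = 0 \<and>
         0 \<le> Re (A $$ (i,i) + c * A $$ (i,j) + cnj c * A $$ (j,i) + cnj c * c * A $$ (j,j))"
proof -
  define v where "v = vec d (\<lambda>k. if k = i then (1::complex) else if k = j then c else 0)"
  have A: "A \<in> carrier_mat d d" using assms psd_def by blast
  have Av: "(A *\<^sub>v v) $ k = A $$ (k,i) + A $$ (k,j) * c" if "k < d" for k
  proof -
    have "(A *\<^sub>v v) $ k = (\<Sum>l<d. A $$ (k,l) * v $ l)"
      using A that by (simp add: scalar_prod_def lessThan_atLeast0 v_def row_def)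
    also have "\<dots> = A $$ (k,i) * v $ i + A $$ (k,j) * v $ j" by (rule sum_two) (use assms in \<open>auto simp: v_def\<close>)
    finally show ?thesis using assms by (simp add: v_def)
  qed
  have "(\<Sum>k<d. cnj (v $ k) * (A *\<^sub>v v) $ k) = cnj (v $ i) * (A *\<^sub>v v) $ i + cnj (v $ j) * (A *\<^sub>v v) $ j"
    by (rule sum_two) (use assms in \<open>auto simp: v_def\<close>)
  also have "\<dots> = A $$ (i,i) + c * A $$ (i,j) + cnj c * A $$ (j,i) + cnj c * c * A $$ (j,j)"
    using assms Av by (simp add: v_def algebra_simps)
  finally show ?thesis using psd_quad[OF assms(1), of v] by (simp add: v_def)
qed

lemma psd_entry:
  assumes "psd d A" "i < d" "j < d"
  shows "cmod (A $$ (i,j)) \<le> Re (A $$ (i,i)) + Re (A $$ (j,j))"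
proof (cases "i = j")
  case True
  then show ?thesis using psd_diag[OF assms(1,2)] by (simp add: cmod_def)
next
  case False
  note di = psd_diag[OF assms(1,2)] and dj = psd_diag[OF assms(1,3)]
  note q1 = psd_two[OF assms False, of 1] and q2 = psd_two[OF assms False, of "-1"]
   and q3 = psd_two[OF assms False, of "\<i>"] and q4 = psd_two[OF assms False, of "-\<i>"]
  define a1 where "a1 = Re (A $$ (i,j))"
  define a2 where "a2 = Im (A $$ (i,j))"
  define b1 where "b1 = Re (A $$ (j,i))"
  define b2 where "b2 = Im (A $$ (j,i))"
  define s where "s = Re (A $$ (i,i)) + Re (A $$ (j,j))"
  have e1: "a2 + b2 = 0" "0 \<le> s + a1 + b1" using q1 di dj by (simp_all add: a1_def a2_def b1_def b2_def s_def)
  have e2: "0 \<le> s - a1 - b1" using q2 di dj by (simp add: a1_def a2_def b1_def b2_def s_def)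
  have e3: "a1 = b1" "0 \<le> s - a2 + b2" using q3 di dj by (simp_all add: a1_def a2_def b1_def b2_def s_def)
  have e4: "0 \<le> s + a2 - b2" using q4 di dj by (simp add: a1_def a2_def b1_def b2_def s_def)
  have "cmod (A $$ (i,j)) \<le> \<bar>a1\<bar> + \<bar>a2\<bar>"
    unfolding a1_def a2_def by (rule cmod_le)
  also have "\<dots> \<le> s" using e1 e2 e3 e4 by linarith
  finally show ?thesis by (simp add: s_def)
qed


lemma mult_diag:
  assumes "A \<in> carrier_mat d d" "B \<in> carrier_mat d d" "i < d"
  shows "(A * B) $$ (i,i) = (\<Sum>j<d. A $$ (i,j) * B $$ (j,i))"
  using assms by (auto simp: scalar_prod_def lessThan_atLeast0 intro!: sum.cong)


lemma code_bound:
  assumes ch: "classical_channel nx ny P" and zc: "zero_error_code nx ny P d M"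
  shows "M \<le> 4 * ny * d * d"
proof -
  obtain x \<rho> E where x: "\<And>m. m < M \<Longrightarrow> x m < nx \<and> density_op d (\<rho> m)"
    and pv: "\<And>y. y < ny \<Longrightarrow> povm d M (E y)"
    and dec: "\<And>m. m < M \<Longrightarrow> (\<Sum>y<ny. complex_of_real (P (x m) y) * mtrace d (E y m * \<rho> m)) = 1"
    using zc unfolding zero_error_code_def by blast
  define t where "t y m = mtrace d (E y m * \<rho> m)" for y m
  have Pnn: "0 \<le> P (x m) y" if "m < M" "y < ny" for m y
    using ch x[OF that(1)] that(2) unfolding classical_channel_def by blast
  have Ple: "P (x m) y \<le> 1" if "m < M" "y < ny" for m y
  proof -
    have "P (x m) y \<le> (\<Sum>y'<ny. P (x m) y')"
      by (rule member_le_sum) (use that Pnn in auto)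
    also have "\<dots> = 1" using ch x[OF that(1)] unfolding classical_channel_def by blast
    finally show ?thesis .
  qed
  have rho_le: "cmod (\<rho> m $$ (j,i)) \<le> 2" if "m < M" "i < d" "j < d" for m i j
  proof -
    have ps: "psd d (\<rho> m)" and tr: "mtrace d (\<rho> m) = 1" using x[OF that(1)] density_op_def by auto
    have le1: "Re (\<rho> m $$ (k,k)) \<le> 1" if "k < d" for k
    proof -
      have "Re (\<rho> m $$ (k,k)) \<le> (\<Sum>l<d. Re (\<rho> m $$ (l,l)))"
        by (rule member_le_sum) (use that psd_diag[OF ps] in auto)
      also have "\<dots> = Re (mtrace d (\<rho> m))" by (simp add: mtrace_def)
      finally show ?thesis using tr by simp
    qed
    show ?thesis using psd_entry[OF ps that(3,2)] le1[OF that(2)] le1[OF that(3)] by linarith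
  qed
  have t_le: "cmod (t y m) \<le> (\<Sum>i<d. \<Sum>j<d. 2 * cmod (E y m $$ (i,j)))" if "m < M" "y < ny" for y m
  proof -
    have Ec: "E y m \<in> carrier_mat d d" using pv[OF that(2)] that(1) unfolding povm_def psd_def by blast
    have rc: "\<rho> m \<in> carrier_mat d d" using x[OF that(1)] unfolding density_op_def psd_def by blast
    have "t y m = (\<Sum>i<d. \<Sum>j<d. E y m $$ (i,j) * \<rho> m $$ (j,i))"
      unfolding t_def mtrace_def using Ec rc
      by (intro sum.cong refl mult_diag[OF Ec rc]) simp
    then have "cmod (t y m) \<le> (\<Sum>i<d. cmod (\<Sum>j<d. E y m $$ (i,j) * \<rho> m $$ (j,i)))"
      by (simp add: norm_sum)
    also have "\<dots> \<le> (\<Sum>i<d. \<Sum>j<d. cmod (E y m $$ (i,j) * \<rho> m $$ (j,i)))"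
      by (intro sum_mono norm_sum)
    also have "\<dots> \<le> (\<Sum>i<d. \<Sum>j<d. 2 * cmod (E y m $$ (i,j)))"
    proof (intro sum_mono)
      fix i j assume "i \<in> {..<d}" "j \<in> {..<d}"
      then have r2: "cmod (\<rho> m $$ (j,i)) \<le> 2" using rho_le[OF that(1)] by auto
      then show "cmod (E y m $$ (i,j) * \<rho> m $$ (j,i)) \<le> 2 * cmod (E y m $$ (i,j))"
        unfolding norm_mult using mult_left_mono[OF r2 norm_ge_zero[of "E y m $$ (i,j)"]] by (simp add: mult.commute)
    qed
    finally show ?thesis .
  qed
  have Esum: "(\<Sum>m<M. cmod (E y m $$ (i,j))) \<le> 2" if "y < ny" "i < d" "j < d" for y i j
  proof -
    have p: "povm d M (E y)" using pv that by blast
    have "(\<Sum>m<M. cmod (E y m $$ (i,j))) \<le> (\<Sum>m<M. Re (E y m $$ (i,i)) + Re (E y m $$ (j,j)))"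
      by (intro sum_mono psd_entry) (use p that in \<open>auto simp: povm_def\<close>)
    also have "\<dots> = Re (\<Sum>m<M. E y m $$ (i,i)) + Re (\<Sum>m<M. E y m $$ (j,j))"
      by (simp add: sum.distrib)
    also have "\<dots> = 2" using p that unfolding povm_def by simp
    finally show ?thesis .
  qed
  have ty: "(\<Sum>m<M. cmod (t y m)) \<le> 4 * real d * real d" if "y < ny" for y
  proof -
    have "(\<Sum>m<M. cmod (t y m)) \<le> (\<Sum>m<M. \<Sum>i<d. \<Sum>j<d. 2 * cmod (E y m $$ (i,j)))"
      by (intro sum_mono t_le that) simp
    also have "\<dots> = (\<Sum>i<d. \<Sum>j<d. 2 * (\<Sum>m<M. cmod (E y m $$ (i,j))))"
      by (simp add: sum_distrib_left sum.swap[of _ "{..<M}"] )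
    also have "\<dots> \<le> (\<Sum>i<d. \<Sum>j<d. (4::real))"
      by (intro sum_mono) (use Esum[OF that] in auto)
    also have "\<dots> = 4 * real d * real d" by simp
    finally show ?thesis .
  qed
  have one: "1 \<le> (\<Sum>y<ny. cmod (t y m))" if "m < M" for m
  proof -
    have "1 = cmod (\<Sum>y<ny. complex_of_real (P (x m) y) * t y m)" using dec[OF that] by (simp add: t_def)
    also have "\<dots> \<le> (\<Sum>y<ny. cmod (complex_of_real (P (x m) y) * t y m))" by (rule norm_sum)
    also have "\<dots> \<le> (\<Sum>y<ny. cmod (t y m))"
    proof (intro sum_mono)
      fix y assume "y \<in> {..<ny}"
      then have "0 \<le> P (x m) y" "P (x m) y \<le> 1" using Pnn Ple that by auto
      then show "cmod (complex_of_real (P (x m) y) * t y m) \<le> cmod (t y m)"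
        by (simp add: norm_mult mult_left_le_one_le)
    qed
    finally show ?thesis .
  qed
  have "real M = (\<Sum>m<M. (1::real))" by simp
  also have "\<dots> \<le> (\<Sum>m<M. \<Sum>y<ny. cmod (t y m))" by (intro sum_mono one) simp
  also have "\<dots> = (\<Sum>y<ny. \<Sum>m<M. cmod (t y m))" by (rule sum.swap)
  also have "\<dots> \<le> (\<Sum>y<ny. 4 * real d * real d)" by (intro sum_mono ty) simp
  also have "\<dots> = real (4 * ny * d * d)" by simp
  finally show ?thesis by linarith
qed



definition cv :: "real list list" where
  "cv = [[0,0,0,1],[0,0,1,0],[1,1,0,0],[1,-1,0,0],[0,1,0,0],[1,0,1,0],[1,0,-1,0],[1,-1,1,-1],
         [1,-1,-1,1],[0,0,1,1],[1,1,1,1],[0,1,0,-1],[1,0,0,1],[1,0,0,-1],[0,1,-1,0],[1,1,-1,1],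
         [1,1,1,-1],[-1,1,1,1]]"
definition bs :: "nat list list" where
  "bs = [[0,1,2,3],[0,4,5,6],[7,8,2,9],[7,10,6,11],[1,4,12,13],[8,10,13,14],[15,16,3,9],[15,17,5,11],[16,17,12,14]]"
definition vc :: "nat \<Rightarrow> nat \<Rightarrow> real" where "vc m i = cv ! m ! i"
definition inb :: "nat \<Rightarrow> nat \<Rightarrow> bool" where "inb y m \<longleftrightarrow> m \<in> set (bs ! y)"
definition Pc :: "nat \<Rightarrow> nat \<Rightarrow> real" where "Pc x y = (if inb y x then 1/2 else 0)"
definition Ec :: "nat \<Rightarrow> nat \<Rightarrow> complex mat" where "Ec y m = (if inb y m then rp 4 (vc m) else 0\<^sub>m 4 4)"

lemma t1: "\<forall>x\<in>set [0..<18]. sum_list (map (\<lambda>y. if x \<in> set (bs!y) then 1 else 0::nat) [0..<9]) = 2"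
  by code_simp
lemma t2: "\<forall>y\<in>set [0..<9]. \<forall>i\<in>set [0..<4]. \<forall>j\<in>set [0..<4]. sum_list (map (\<lambda>m. cv!m!i * cv!m!j / sum_list (map (\<lambda>k. (cv!m!k)^2) [0..<4])) (bs!y)) = (if i = j then 1 else 0)"
  by code_simp
lemma t3: "\<forall>m\<in>set [0..<18]. sum_list (map (\<lambda>k. (cv!m!k)^2) [0..<4]) > 0"
  by code_simp
lemma t4: "\<forall>y\<in>set [0..<9]. distinct (bs!y) \<and> (\<forall>m\<in>set (bs!y). m < 18)"
  by code_simp

lemma nrm_eq: "(\<Sum>k<4. (vc m k)\<^sup>2) = sum_list (map (\<lambda>k. (cv!m!k)^2) [0..<4])"
  by (simp add: vc_def sum_set_upt_conv_sum_list_nat[symmetric] lessThan_atLeast0)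

lemma nrm_pos: "m < 18 \<Longrightarrow> (\<Sum>k<4. (vc m k)\<^sup>2) > 0"
  using t3 by (simp add: nrm_eq)

lemma count2: "x < 18 \<Longrightarrow> (\<Sum>y<9. (if inb y x then 1 else 0::nat)) = 2"
  using t1 by (simp add: inb_def sum_set_upt_conv_sum_list_nat[symmetric] lessThan_atLeast0)

lemma Psum: "x < 18 \<Longrightarrow> (\<Sum>y<9. Pc x y) = 1"
proof -
  assume x: "x < 18"
  have "(\<Sum>y<9. Pc x y) = (\<Sum>y<9. (1/2) * real (if inb y x then 1 else 0::nat))"
    by (rule sum.cong[OF refl]) (simp add: Pc_def)
  also have "\<dots> = (1/2) * real (\<Sum>y<9. (if inb y x then 1 else 0::nat))"
    by (simp only: sum_distrib_left of_nat_sum)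
  also have "\<dots> = 1" using count2[OF x] by simp
  finally show ?thesis .
qed

lemma chan: "classical_channel 18 9 Pc"
  unfolding classical_channel_def using Psum by (auto simp: Pc_def)

lemma noisy: "noisy_channel 18 9 Pc"
  unfolding noisy_channel_def confusable_def
  by (rule exI[of _ 0], simp, rule exI[of _ 1], simp, rule exI[of _ 0]) (simp add: Pc_def inb_def bs_def)

lemma bsum: "y < 9 \<Longrightarrow> i < 4 \<Longrightarrow> j < 4 \<Longrightarrow>
   (\<Sum>m\<in>set (bs ! y). vc m i * vc m j / (\<Sum>k<4. (vc m k)\<^sup>2)) = (if i = j then 1 else 0)"
  using t2 t4 by (simp add: nrm_eq sum.distinct_set_conv_list) (simp add: vc_def)



lemma indep_le: assumes ind: "independent_set 18 9 Pc S" shows "card S \<le> 4"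
proof -
  have Ssub: "S \<subseteq> {..<18}" using ind independent_set_def by blast
  then have fin: "finite S" using finite_subset by blast
  define B where "B y = {m. inb y m}" for y
  have c1: "card (S \<inter> B y) \<le> 1" if "y < 9" for y
  proof -
    have "\<forall>a\<in>S \<inter> B y. \<forall>b\<in>S \<inter> B y. a = b"
    proof (intro ballI, rule ccontr)
      fix a b assume a: "a \<in> S \<inter> B y" and b: "b \<in> S \<inter> B y" and ne: "a \<noteq> b"
      have "confusable 9 Pc a b" unfolding confusable_def
        using ne a b that by (auto simp: B_def Pc_def)
      then show False using ind a b unfolding independent_set_def by blast
    qed
    then show ?thesis using card_le_Suc0_iff_eq[of "S \<inter> B y"] fin by simp
  qed
  have "2 * card S = (\<Sum>x\<in>S. (2::nat))" by simp
  also have "\<dots> = (\<Sum>x\<in>S. \<Sum>y<9. (if inb y x then 1 else 0::nat))"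
    by (rule sum.cong[OF refl]) (use count2 Ssub in auto)
  also have "\<dots> = (\<Sum>y<9. \<Sum>x\<in>S. (if x \<in> B y then 1 else 0::nat))"
    by (subst sum.swap) (simp add: B_def)
  also have "\<dots> = (\<Sum>y<9. card (S \<inter> B y))"
    by (rule sum.cong[OF refl]) (simp add: sum.inter_restrict[OF fin, symmetric])
  also have "\<dots> \<le> (\<Sum>y<(9::nat). (1::nat))" by (rule sum_mono) (use c1 in auto)
  finally show ?thesis by simp
qed

lemma indnum: "independence_number 18 9 Pc \<le> 4"
proof -
  have fin: "finite {S. independent_set 18 9 Pc S}"
    by (rule finite_subset[of _ "Pow {..<18}"]) (auto simp: independent_set_def)
  have ne: "{} \<in> {S. independent_set 18 9 Pc S}" by (simp add: independent_set_def)
  show ?thesis unfolding independence_number_def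
    using fin ne indep_le by (subst Max_le_iff) auto
qed

lemma psd_zero: "psd d (0\<^sub>m d d)"
  unfolding psd_def Let_def by (simp add: scalar_prod_def)

lemma Ec_psd: "y < 9 \<Longrightarrow> m < 18 \<Longrightarrow> psd 4 (Ec y m)"
  by (simp add: Ec_def rp_psd nrm_pos psd_zero)

lemma Ec_sum: assumes "y < 9" "i < 4" "j < 4"
  shows "(\<Sum>m<18. Ec y m $$ (i,j)) = 1\<^sub>m 4 $$ (i,j)"
proof -
  have "(\<Sum>m<18. Ec y m $$ (i,j)) = (\<Sum>m<18. if m \<in> set (bs ! y) then complex_of_real (vc m i * vc m j / (\<Sum>k<4. (vc m k)\<^sup>2)) else 0)"
    by (rule sum.cong[OF refl]) (use assms in \<open>simp add: Ec_def inb_def rp_def\<close>)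
  also have "\<dots> = (\<Sum>m\<in>{..<18} \<inter> set (bs ! y). complex_of_real (vc m i * vc m j / (\<Sum>k<4. (vc m k)\<^sup>2)))"
    by (rule sum.inter_restrict[symmetric]) simp
  also have "{..<18} \<inter> set (bs ! y) = set (bs ! y)" using t4 assms(1) by auto
  also have "(\<Sum>m\<in>set (bs ! y). complex_of_real (vc m i * vc m j / (\<Sum>k<4. (vc m k)\<^sup>2)))
     = complex_of_real (if i = j then 1 else 0)"
    unfolding of_real_sum[symmetric] using bsum[OF assms] by simp
  finally show ?thesis using assms by simp
qed

lemma code18: "zero_error_code 18 9 Pc 4 18"
  unfolding zero_error_code_def
proof (intro exI[of _ "\<lambda>m. m"] exI[of _ "\<lambda>m. rp 4 (vc m)"] exI[of _ Ec] conjI allI impI)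
  fix m :: nat assume m: "m < 18"
  show "m < 18" by fact
  show "density_op 4 (rp 4 (vc m))" unfolding density_op_def
    using rp_psd[OF nrm_pos[OF m]] rp_trace[OF nrm_pos[OF m]] by simp
next
  fix y :: nat assume y: "y < 9"
  show "povm 4 18 (Ec y)" unfolding povm_def using Ec_psd[OF y] Ec_sum[OF y] by blast
next
  fix m :: nat assume m: "m < 18"
  have "(\<Sum>y<9. complex_of_real (Pc m y) * mtrace 4 (Ec y m * rp 4 (vc m))) = (\<Sum>y<9. complex_of_real (Pc m y))"
    by (rule sum.cong[OF refl]) (simp add: Ec_def Pc_def rp_trace2[OF nrm_pos[OF m]])
  also have "\<dots> = 1" unfolding of_real_sum[symmetric] using Psum[OF m] by simp
  finally show "(\<Sum>y<9. complex_of_real (Pc m y) * mtrace 4 (Ec y m * rp 4 (vc m))) = 1" .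
qed

theorem theorem1:
  shows "\<exists>(nx::nat) (ny::nat) (P :: nat \<Rightarrow> nat \<Rightarrow> real) (d::nat).
           classical_channel nx ny P \<and> noisy_channel nx ny P \<and> 1 \<le> d \<and>
           parallel_capacity nx ny P d > independence_number nx ny P * d"
proof (intro exI conjI)
  have "18 \<le> parallel_capacity 18 9 Pc 4"
    unfolding parallel_capacity_def
    by (rule Greatest_le_nat[where b = "4 * 9 * 4 * 4"]) (use code18 code_bound[OF chan, of 4] in auto)
  moreover have "independence_number 18 9 Pc * 4 \<le> 16" using indnum by simp
  ultimately show "parallel_capacity 18 9 Pc 4 > independence_number 18 9 Pc * 4" by simp
qed (use chan noisy in auto)


end
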